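(* Consider any instance of the rescheduling problem $(1, h_1 \mid \Delta_{\max}\le k \mid \mu\Delta_{\max} + \sum_{j=1}^n w_j C_j)$ described in the context, and suppose it admits at least one feasible schedule. Then there exists an optimal schedule $\sigma^*$ such that (a) the jobs in the earlier schedule of $\sigma^*$ are processed in increasing order of their indices (i.e., in the same order as in $\pi^*$); and (b) the jobs in the later schedule of $\sigma^*$ are also processed in increasing order of their indices.
   Context: An instance consists of $n$ jobs $J_1,\dots,J_n$, where $J_j$ has a positive integer processing time $p_j$ and a positive integer weight $w_j$, indexed in WSPT order $p_1/w_1\le p_2/w_2\le\cdots\le p_n/w_n$; integers $T_1,T_2$ with $0\le T_1<T_2$ (the machine is unavailable during $[T_1,T_2]$); an integer $k$; and a rational $\mu\ge 0$. The original schedule $\pi^*$ processes $J_1,\dots,J_n$ in this order consecutively from time $0$ without idle time, so $S_j(\pi^* )=\sum_{i<j}p_i$ and $C_j(\pi^* )=\sum_{i\le j}p_i$. A schedule $\sigma$ assigns each job a start time $S_j(\sigma)\ge 0$; jobs are processed non-preemptively on a single machine, $C_j(\sigma)=S_j(\sigma)+p_j$, no two jobs overlap in time, and no job is processed inside the unavailability interval (each job has $C_j(\sigma)\le T_1$ or $S_j(\sigma)\ge T_2$). Let $\Delta_j=|C_j(\sigma)-C_j(\pi^* )|$ and $\Delta_{\max}=\max_j\Delta_j$. A schedule is feasible if $\Delta_{\max}\le k$; an optimal schedule is a feasible schedule minimizing $\mu\Delta_{\max}+\sum_{j=1}^n w_jC_j(\sigma)$. The earlier schedule of $\sigma$ consists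 of the jobs with $C_j(\sigma)\le T_1$; the later schedule consists of the jobs completed after $T_2$. Standing assumptions: some job has $C_j(\pi^* )>T_1$; letting $j_1$ be the smallest such index, $p_{\min}\le T_1<P$ and $T_2-S_{j_1}(\pi^* )\le k$, where $p_{\min}=\min_j p_j$ and $P=\sum_j p_j$. *)

theory Defs
  imports Complex_Main
begin

text \<open>Jobs are indexed 1..n; p j, w j are processing times and weights.
A schedule is given by its start-time function S :: nat => real.\<close>

definition Cpi :: "(nat \<Rightarrow> nat) \<Rightarrow> nat \<Rightarrow> real" where
  "Cpi p j = real (\<Sum>i\<in>{1..j}. p i)"

definition Spi :: "(nat \<Rightarrow> nat) \<Rightarrow> nat \<Rightarrow> real" where
  "Spi p j = real (\<Sum>i\<in>{1..<j}. p i)"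

definition Cs :: "(nat \<Rightarrow> nat) \<Rightarrow> (nat \<Rightarrow> real) \<Rightarrow> nat \<Rightarrow> real" where
  "Cs p S j = S j + real (p j)"

definition valid_schedule ::
  "nat \<Rightarrow> (nat \<Rightarrow> nat) \<Rightarrow> nat \<Rightarrow> nat \<Rightarrow> (nat \<Rightarrow> real) \<Rightarrow> bool" where
  "valid_schedule n p T1 T2 S \<longleftrightarrow>
     (\<forall>j\<in>{1..n}. S j \<ge> 0) \<and>
     (\<forall>i\<in>{1..n}. \<forall>j\<in>{1..n}. i \<noteq> j \<longrightarrow> Cs p S i \<le> S j \<or> Cs p S j \<le> S i) \<and>
     (\<forall>j\<in>{1..n}. Cs p S j \<le> real T1 \<or> S j \<ge> real T2)"

definition Delta_max :: "nat \<Rightarrow> (nat \<Rightarrow> nat) \<Rightarrow> (nat \<Rightarrow> real) \<Rightarrow> real" where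
  "Delta_max n p S = Max ((\<lambda>j. \<bar>Cs p S j - Cpi p j\<bar>) ` {1..n})"

definition feasible ::
  "nat \<Rightarrow> (nat \<Rightarrow> nat) \<Rightarrow> nat \<Rightarrow> nat \<Rightarrow> int \<Rightarrow> (nat \<Rightarrow> real) \<Rightarrow> bool" where
  "feasible n p T1 T2 k S \<longleftrightarrow>
     valid_schedule n p T1 T2 S \<and> Delta_max n p S \<le> real_of_int k"

definition cost ::
  "nat \<Rightarrow> (nat \<Rightarrow> nat) \<Rightarrow> (nat \<Rightarrow> nat) \<Rightarrow> real \<Rightarrow> (nat \<Rightarrow> real) \<Rightarrow> real" where
  "cost n p w mu S = mu * Delta_max n p S + (\<Sum>j\<in>{1..n}. real (w j) * Cs p S j)"

definition optimal ::
  "nat \<Rightarrow> (nat \<Rightarrow> nat) \<Rightarrow> (nat \<Rightarrow> nat) \<Rightarrow> nat \<Rightarrow> nat \<Rightarrow> int \<Rightarrow> real \<Rightarrow> (nat \<Rightarrow> real) \<Rightarrow> bool" where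
  "optimal n p w T1 T2 k mu S \<longleftrightarrow>
     feasible n p T1 T2 k S \<and>
     (\<forall>S'. feasible n p T1 T2 k S' \<longrightarrow> cost n p w mu S \<le> cost n p w mu S')"

end

theory Submission
  imports Defs "HOL-Analysis.Analysis"
begin


lemma closed_valid: "closed {S::nat\<Rightarrow>real. valid_schedule n p T1 T2 S}"
  unfolding valid_schedule_def Cs_def Ball_def
  by (intro closed_Collect_conj closed_Collect_all closed_Collect_imp closed_Collect_disj
        closed_Collect_le open_Collect_const continuous_intros
        continuous_on_product_coordinates)

lemma closed_dev: "closed {S::nat\<Rightarrow>real. \<forall>j\<in>{1..n}. \<bar>Cs p S j - Cpi p j\<bar> \<le> c}"
  unfolding Cs_def Ball_def
  by (intro closed_Collect_conj closed_Collect_all closed_Collect_imp closed_Collect_disj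
        closed_Collect_le open_Collect_const continuous_intros
        continuous_on_product_coordinates)

lemma cont_Max:
  assumes "finite A" "A \<noteq> {}" "\<And>a. a \<in> A \<Longrightarrow> continuous_on K (f a)"
  shows "continuous_on K (\<lambda>x. Max ((\<lambda>a. f a x) ` A) :: real)"
  using assms
proof (induction A rule: finite_ne_induct)
  case (singleton x) then show ?case by simp
next
  case (insert a F)
  have "continuous_on K (\<lambda>x. max (f a x) (Max ((\<lambda>a. f a x) ` F)))"
    using insert by (intro continuous_on_max) auto
  moreover have "\<And>x. Max ((\<lambda>a. f a x) ` insert a F) = max (f a x) (Max ((\<lambda>a. f a x) ` F))"
    using insert by (simp add: Max_insert)
  ultimately show ?case by simp
qed

lemma cont_cost: "continuous_on UNIV (\<lambda>S. cost n p w mu S)"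
proof (cases "n = 0")
  case True then show ?thesis by (simp add: cost_def Delta_max_def)
next
  case False
  have "continuous_on UNIV (\<lambda>S. Delta_max n p S)"
    unfolding Delta_max_def Cs_def using False
    by (intro cont_Max) (auto intro!: continuous_intros continuous_on_product_coordinates)
  then show ?thesis unfolding cost_def Cs_def
    by (intro continuous_intros continuous_on_product_coordinates) auto
qed

lemma agree:
  assumes "\<And>j. j \<in> {1..n} \<Longrightarrow> S j = S' j"
  shows "feasible n p T1 T2 k S = feasible n p T1 T2 k S'" "cost n p w mu S = cost n p w mu S'"
proof -
  have c: "\<And>j. j \<in> {1..n} \<Longrightarrow> Cs p S j = Cs p S' j" using assms by (simp add: Cs_def)
  have v: "valid_schedule n p T1 T2 S = valid_schedule n p T1 T2 S'"
    unfolding valid_schedule_def using c assms by auto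
  have d: "Delta_max n p S = Delta_max n p S'"
    unfolding Delta_max_def using c by (metis (no_types, lifting) image_cong)
  show "feasible n p T1 T2 k S = feasible n p T1 T2 k S'" unfolding feasible_def using v d by simp
  show "cost n p w mu S = cost n p w mu S'" unfolding cost_def using d c by simp
qed

lemma feas_iff:
  assumes "n \<ge> 1"
  shows "feasible n p T1 T2 k S \<longleftrightarrow> valid_schedule n p T1 T2 S \<and>
     (\<forall>j\<in>{1..n}. \<bar>Cs p S j - Cpi p j\<bar> \<le> real_of_int k)"
  unfolding feasible_def Delta_max_def using assms by (subst Max_le_iff) auto

lemma exists_opt:
  assumes "n \<ge> 1" "\<exists>S. feasible n p T1 T2 k S"
  shows "\<exists>S. optimal n p w T1 T2 k mu S"
proof -
  define box where "box = (\<lambda>m. if m \<in> {1..n} then {Cpi p m - p m - k .. Cpi p m - p m + k} else {0::real})"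
  define K where "K = PiE UNIV box \<inter> {S. valid_schedule n p T1 T2 S} \<inter>
     {S::nat\<Rightarrow>real. \<forall>j\<in>{1..n}. \<bar>Cs p S j - Cpi p j\<bar> \<le> real_of_int k}"
  have cb: "compact (PiE UNIV box)"
  proof -
    have "compactin (product_topology (\<lambda>_. euclidean) UNIV) (PiE UNIV box)"
      by (subst compactin_PiE) (auto simp: box_def)
    then show ?thesis by (simp add: euclidean_product_topology)
  qed
  have cK: "compact K" unfolding K_def
    using cb closed_valid closed_dev by (intro compact_Int_closed) auto
  define N where "N = (\<lambda>S::nat\<Rightarrow>real. \<lambda>m. if m \<in> {1..n} then S m else 0)"
  have NK: "N S \<in> K" if "feasible n p T1 T2 k S" for S
  proof -
    have fN: "feasible n p T1 T2 k (N S)" using that agree(1)[of n "N S" S] by (simp add: N_def)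
    then have "\<forall>j\<in>{1..n}. \<bar>Cs p (N S) j - Cpi p j\<bar> \<le> real_of_int k" "valid_schedule n p T1 T2 (N S)"
      using feas_iff[OF assms(1)] by auto
    moreover have "N S \<in> PiE UNIV box"
      using calculation(1) by (force simp: N_def box_def Cs_def abs_le_iff)
    ultimately show ?thesis unfolding K_def by auto
  qed
  have Kf: "S \<in> K \<Longrightarrow> feasible n p T1 T2 k S" for S
    unfolding K_def using feas_iff[OF assms(1)] by auto
  have "K \<noteq> {}" using assms(2) NK by blast
  then obtain S0 where S0: "S0 \<in> K" "\<And>S. S \<in> K \<Longrightarrow> cost n p w mu S0 \<le> cost n p w mu S"
    using continuous_attains_inf[OF cK _ continuous_on_subset[OF cont_cost]] by blast
  have "optimal n p w T1 T2 k mu S0"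
    unfolding optimal_def
  proof (intro conjI allI impI)
    show "feasible n p T1 T2 k S0" using Kf S0 by blast
  next
    fix S' assume "feasible n p T1 T2 k S'"
    then have "cost n p w mu S0 \<le> cost n p w mu (N S')" using S0 NK by blast
    also have "\<dots> = cost n p w mu S'" using agree(2)[of n "N S'" S'] by (simp add: N_def)
    finally show "cost n p w mu S0 \<le> cost n p w mu S'" .
  qed
  then show ?thesis by blast
qed



definition invs :: "nat \<Rightarrow> (nat \<Rightarrow> real) \<Rightarrow> (nat \<times> nat) set" where
  "invs n S = {(a,b). a \<in> {1..n} \<and> b \<in> {1..n} \<and> a < b \<and> S b < S a}"

lemma Cpi_mono:
  assumes "i < j"
  shows "Cpi p i + real (p j) \<le> Cpi p j"
proof -
  have "(\<Sum>m\<in>{1..i}. p m) + p j = (\<Sum>m\<in>insert j {1..i}. p m)"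
    using assms by simp
  also have "\<dots> \<le> (\<Sum>m\<in>{1..j}. p m)"
    using assms by (intro sum_mono2) auto
  finally show ?thesis unfolding Cpi_def by (metis of_nat_add of_nat_le_iff)
qed

lemma swap:
  fixes S :: "nat \<Rightarrow> real"
  assumes p_pos: "\<forall>j\<in>{1..n}. p j > 0"
    and w_pos: "\<forall>j\<in>{1..n}. w j > 0"
    and wspt: "\<forall>i\<in>{1..n}. \<forall>j\<in>{1..n}. i \<le> j \<longrightarrow>
                 real (p i) / real (w i) \<le> real (p j) / real (w j)"
    and mu: "mu \<ge> 0"
    and F: "feasible n p T1 T2 k S"
    and ij: "i \<in> {1..n}" "j \<in> {1..n}" "i < j" "S j < S i"
    and side: "Cs p S i \<le> real T1 \<or> S j \<ge> real T2"
    and adj: "\<forall>m\<in>{1..n}. \<not> (S j < S m \<and> S m < S i)"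
  defines "S' \<equiv> S(i := S j, j := S j + real (p i))"
  shows "feasible n p T1 T2 k S'" "cost n p w mu S' \<le> cost n p w mu S"
    "card (invs n S') < card (invs n S)"
proof -
  have V: "valid_schedule n p T1 T2 S" and Dk: "Delta_max n p S \<le> real_of_int k"
    using F unfolding feasible_def by auto
  have nn: "\<forall>m\<in>{1..n}. S m \<ge> 0"
    and dis: "\<forall>a\<in>{1..n}. \<forall>b\<in>{1..n}. a \<noteq> b \<longrightarrow> Cs p S a \<le> S b \<or> Cs p S b \<le> S a"
    and av: "\<forall>m\<in>{1..n}. Cs p S m \<le> real T1 \<or> S m \<ge> real T2"
    using V unfolding valid_schedule_def by auto
  have pi: "p i > 0" "p j > 0" using p_pos ij by auto
  have neq: "i \<noteq> j" using ij by simp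
  have Ci: "Cs p S i = S i + p i" and Cj: "Cs p S j = S j + p j" by (simp_all add: Cs_def)
  have dij: "S j + p j \<le> S i"
  proof -
    have "Cs p S i \<le> S j \<or> Cs p S j \<le> S i" using dis ij neq by auto
    then show ?thesis using Ci Cj ij(4) by auto
  qed
  have S'i: "S' i = S j" and S'j: "S' j = S j + p i" and S'o: "\<And>m. m \<noteq> i \<Longrightarrow> m \<noteq> j \<Longrightarrow> S' m = S m"
    unfolding S'_def using neq by auto
  have C'o: "\<And>m. m \<noteq> i \<Longrightarrow> m \<noteq> j \<Longrightarrow> Cs p S' m = Cs p S m" using S'o by (simp add: Cs_def)
  have C'i: "Cs p S' i = S j + p i" and C'j: "Cs p S' j = S j + p i + p j"
    using S'i S'j by (simp_all add: Cs_def)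
  have oth: "(S m < S j \<and> Cs p S m \<le> S j) \<or> (S i + p i \<le> S m)"
    if m: "m \<in> {1..n}" "m \<noteq> i" "m \<noteq> j" for m
  proof -
    have pm: "p m > 0" using p_pos m by auto
    have "Cs p S m \<le> S j \<or> Cs p S j \<le> S m" using dis m ij by auto
    moreover have "Cs p S m \<le> S i \<or> Cs p S i \<le> S m" using dis m ij by auto
    moreover have "\<not> (S j < S m \<and> S m < S i)" using adj m by auto
    ultimately show ?thesis using pm pi unfolding Cs_def
      by (smt (verit) of_nat_0_less_iff)
  qed
  have V': "valid_schedule n p T1 T2 S'"
    unfolding valid_schedule_def
  proof (intro conjI ballI impI)
    fix m assume m: "m \<in> {1..n}"
    show "S' m \<ge> 0" using nn m ij S'i S'j S'o 
    proof -
      have "S j \<ge> 0" using nn ij by auto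
      then show ?thesis using nn m S'i S'j S'o by (cases "m = i \<or> m = j") auto
    qed
  next
    fix a b assume ab: "a \<in> {1..n}" "b \<in> {1..n}" "a \<noteq> b"
    show "Cs p S' a \<le> S' b \<or> Cs p S' b \<le> S' a"
    proof (cases "a \<in> {i,j}")
      case True
      show ?thesis
      proof (cases "b \<in> {i,j}")
        case True
        then show ?thesis using \<open>a \<in> {i,j}\<close> ab S'i S'j C'i C'j by auto
      next
        case False
        then have "(S b < S j \<and> Cs p S b \<le> S j) \<or> (S i + p i \<le> S b)" using oth ab by auto
        then show ?thesis using True False C'o[of b] S'o[of b] C'i C'j S'i S'j dij
          by (auto simp: Cs_def)
      qed
    next
      case False
      show ?thesis
      proof (cases "b \<in> {i,j}")
        case True
        have "(S a < S j \<and> Cs p S a \<le> S j) \<or> (S i + p i \<le> S a)" using oth ab False by auto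
        then show ?thesis using True False C'o[of a] S'o[of a] C'i C'j S'i S'j dij
          by (auto simp: Cs_def)
      next
        case False
        then show ?thesis using \<open>a \<notin> {i,j}\<close> dis ab C'o S'o by auto
      qed
    qed
  next
    fix m assume m: "m \<in> {1..n}"
    show "Cs p S' m \<le> real T1 \<or> S' m \<ge> real T2"
    proof (cases "m \<in> {i,j}")
      case True
      then show ?thesis using side C'i C'j S'i S'j dij Ci pi by auto
    next
      case False
      then show ?thesis using av m C'o S'o by auto
    qed
  qed
  have ne: "{1..n} \<noteq> {}" using ij by auto
  let ?D = "Delta_max n p S"
  have dev: "\<And>m. m \<in> {1..n} \<Longrightarrow> \<bar>Cs p S m - Cpi p m\<bar> \<le> ?D"
    unfolding Delta_max_def by (intro Max_ge) auto
  have cm: "Cpi p i + real (p j) \<le> Cpi p j" using Cpi_mono ij by blast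
  have dev': "\<bar>Cs p S' m - Cpi p m\<bar> \<le> ?D" if m: "m \<in> {1..n}" for m
  proof (cases "m \<in> {i,j}")
    case False then show ?thesis using dev m C'o by auto
  next
    case True
    have di: "\<bar>Cs p S i - Cpi p i\<bar> \<le> ?D" and dj: "\<bar>Cs p S j - Cpi p j\<bar> \<le> ?D" using dev ij by auto
    show ?thesis using True di dj C'i C'j Ci Cj cm dij by (auto simp: abs_le_iff)
  qed
  have DD: "Delta_max n p S' \<le> ?D"
    using ne dev' unfolding Delta_max_def[of n p S'] by (subst Max_le_iff) auto
  show "feasible n p T1 T2 k S'" unfolding feasible_def using V' DD Dk by auto
  define g where "g = (\<lambda>T m. real (w m) * Cs p T m)"
  have "(\<Sum>m\<in>{1..n}. g S' m) - (\<Sum>m\<in>{1..n}. g S m) = (\<Sum>m\<in>{1..n}. g S' m - g S m)"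
    by (simp add: sum_subtractf)
  also have "\<dots> = (\<Sum>m\<in>{i,j}. g S' m - g S m)"
    using ij C'o by (intro sum.mono_neutral_right) (auto simp: g_def)
  also have "\<dots> = (g S' i - g S i) + (g S' j - g S j)" using neq by simp
  also have "\<dots> = real (w i) * (S j - S i) + real (w j) * p i"
    unfolding g_def using C'i C'j Ci Cj by (simp add: algebra_simps)
  also have "\<dots> \<le> 0"
  proof -
    have wi: "w i > 0" "w j > 0" using w_pos ij by auto
    have "real (p i) / real (w i) \<le> real (p j) / real (w j)" using wspt ij by auto
    then have "real (p i) * real (w j) \<le> real (p j) * real (w i)"
      using wi by (simp add: divide_simps)
    moreover have "real (w i) * p j \<le> real (w i) * (S i - S j)"
      using dij by (intro mult_left_mono) auto
    ultimately show ?thesis by (simp add: algebra_simps)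
  qed
  finally have sw: "(\<Sum>m\<in>{1..n}. g S' m) \<le> (\<Sum>m\<in>{1..n}. g S m)" by simp
  have "mu * Delta_max n p S' \<le> mu * ?D" using mu DD by (simp add: mult_left_mono)
  then show "cost n p w mu S' \<le> cost n p w mu S"
    using sw unfolding cost_def g_def by simp
  have sub: "invs n S' \<subseteq> invs n S - {(i,j)}"
  proof
    fix x assume x: "x \<in> invs n S'"
    obtain a b where xab: "x = (a,b)" by force
    have ab: "a \<in> {1..n}" "b \<in> {1..n}" "a < b" "S' b < S' a" using x xab by (auto simp: invs_def)
    have "S b < S a \<and> (a,b) \<noteq> (i,j)"
    proof (cases "a \<in> {i,j}")
      case True
      show ?thesis
      proof (cases "b \<in> {i,j}")
        case True
        then show ?thesis using \<open>a \<in> {i,j}\<close> ab S'i S'j pi ij by auto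
      next
        case False
        then have "(S b < S j \<and> Cs p S b \<le> S j) \<or> (S i + p i \<le> S b)" using oth ab by auto
        then show ?thesis using True False S'o[of b] S'i S'j dij ab ij by auto
      qed
    next
      case False
      show ?thesis
      proof (cases "b \<in> {i,j}")
        case True
        have "(S a < S j \<and> Cs p S a \<le> S j) \<or> (S i + p i \<le> S a)" using oth ab False by auto
        then show ?thesis using True False S'o[of a] S'i S'j dij ab ij pi by auto
      next
        case False
        then show ?thesis using \<open>a \<notin> {i,j}\<close> ab S'o by auto
      qed
    qed
    then show "x \<in> invs n S - {(i,j)}" using ab xab by (auto simp: invs_def)
  qed
  have ijin: "(i,j) \<in> invs n S" using ij by (auto simp: invs_def)
  have fin: "finite (invs n S)"
    by (rule finite_subset[of _ "{1..n} \<times> {1..n}"]) (auto simp: invs_def)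
  have "invs n S' \<subset> invs n S" using sub ijin by blast
  then show "card (invs n S') < card (invs n S)" using fin by (rule psubset_card_mono[rotated])
qed


lemma no_inv:
  fixes S :: "nat \<Rightarrow> real" and Q :: "nat \<Rightarrow> bool"
  assumes p_pos: "\<forall>j\<in>{1..n}. p j > 0"
    and w_pos: "\<forall>j\<in>{1..n}. w j > 0"
    and wspt: "\<forall>i\<in>{1..n}. \<forall>j\<in>{1..n}. i \<le> j \<longrightarrow>
                 real (p i) / real (w i) \<le> real (p j) / real (w j)"
    and mu: "mu \<ge> 0"
    and opt: "optimal n p w T1 T2 k mu S"
    and minS: "\<forall>S'. optimal n p w T1 T2 k mu S' \<longrightarrow> card (invs n S) \<le> card (invs n S')"
    and hQ1: "\<forall>a\<in>{1..n}. \<forall>b\<in>{1..n}. Q a \<longrightarrow> Q b \<longrightarrow> Cs p S a \<le> real T1 \<or> S b \<ge> real T2"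
    and hQ2: "\<forall>a\<in>{1..n}. \<forall>b\<in>{1..n}. \<forall>m\<in>{1..n}. Q a \<and> Q b \<and> S b < S m \<and> S m < S a \<longrightarrow> Q m"
  shows "\<forall>i\<in>{1..n}. \<forall>j\<in>{1..n}. i < j \<and> Q i \<and> Q j \<longrightarrow> S i < S j"
proof (rule ccontr)
  assume "\<not> ?thesis"
  then obtain i0 j0 where ij0: "i0 \<in> {1..n}" "j0 \<in> {1..n}" "i0 < j0" "Q i0" "Q j0" "\<not> S i0 < S j0"
    by blast
  have F: "feasible n p T1 T2 k S" using opt unfolding optimal_def by auto
  then have dis: "\<forall>a\<in>{1..n}. \<forall>b\<in>{1..n}. a \<noteq> b \<longrightarrow> Cs p S a \<le> S b \<or> Cs p S b \<le> S a"
    unfolding feasible_def valid_schedule_def by auto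
  have "S j0 < S i0"
  proof -
    have "Cs p S i0 \<le> S j0 \<or> Cs p S j0 \<le> S i0" using dis ij0 by auto
    moreover have "p i0 > 0" "p j0 > 0" using p_pos ij0 by auto
    ultimately show ?thesis using ij0(6) unfolding Cs_def by auto
  qed
  define D where "D = {(a,b). a \<in> {1..n} \<and> b \<in> {1..n} \<and> a < b \<and> S b < S a \<and> Q a \<and> Q b}"
  define f where "f = (\<lambda>x. S (fst x) - S (snd x))"
  have finD: "finite D" by (rule finite_subset[of _ "{1..n} \<times> {1..n}"]) (auto simp: D_def)
  have neD: "D \<noteq> {}" using ij0 \<open>S j0 < S i0\<close> unfolding D_def by blast
  have "Min (f ` D) \<in> f ` D" using finD neD by (intro Min_in) auto
  then obtain x where xD: "x \<in> D" and xmin: "f x = Min (f ` D)" by (metis imageE)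
  have le: "\<And>y. y \<in> D \<Longrightarrow> f x \<le> f y" using xmin finD by simp
  obtain i j where xij: "x = (i,j)" by force
  have ij: "i \<in> {1..n}" "j \<in> {1..n}" "i < j" "S j < S i" "Q i" "Q j"
    using xD xij by (auto simp: D_def)
  have adj: "\<forall>m\<in>{1..n}. \<not> (S j < S m \<and> S m < S i)"
  proof (intro ballI notI)
    fix m assume m: "m \<in> {1..n}" and btw: "S j < S m \<and> S m < S i"
    have Qm: "Q m" using hQ2 ij m btw by blast
    show False
    proof (cases "m < j")
      case True
      then have "(m,j) \<in> D" using m ij Qm btw by (auto simp: D_def)
      then have "f x \<le> f (m,j)" by (rule le)
      then show False using xij btw by (simp add: f_def)
    next
      case False
      then have "i < m" using ij btw by (metis less_irrefl linorder_neqE_nat order.strict_trans)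
      then have "(i,m) \<in> D" using m ij Qm btw by (auto simp: D_def)
      then have "f x \<le> f (i,m)" by (rule le)
      then show False using xij btw by (simp add: f_def)
    qed
  qed
  have side: "Cs p S i \<le> real T1 \<or> S j \<ge> real T2" using hQ1 ij by blast
  define S' where "S' = S(i := S j, j := S j + real (p i))"
  have r: "feasible n p T1 T2 k S'" "cost n p w mu S' \<le> cost n p w mu S"
    "card (invs n S') < card (invs n S)"
    using swap[OF p_pos w_pos wspt mu F ij(1-4) side adj] unfolding S'_def by auto
  have "optimal n p w T1 T2 k mu S'"
    using r(1,2) opt unfolding optimal_def by (meson order_trans)
  then show False using minS r(3) by (meson not_le)
qed

theorem lemma1:
  fixes n :: nat and p w :: "nat \<Rightarrow> nat" and T1 T2 :: nat and k :: int and mu :: real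
  assumes p_pos: "\<forall>j\<in>{1..n}. p j > 0"
    and w_pos: "\<forall>j\<in>{1..n}. w j > 0"
    and wspt: "\<forall>i\<in>{1..n}. \<forall>j\<in>{1..n}. i \<le> j \<longrightarrow>
                 real (p i) / real (w i) \<le> real (p j) / real (w j)"
    and T12: "T1 < T2"
    and mu_rat: "mu \<in> \<rat>" and mu_nonneg: "mu \<ge> 0"
    and late_exists: "\<exists>j\<in>{1..n}. Cpi p j > real T1"
    and pmin: "real (Min (p ` {1..n})) \<le> real T1"
    and T1P: "real T1 < real (\<Sum>j\<in>{1..n}. p j)"
    and j1: "real T2 - Spi p (LEAST j. j \<in> {1..n} \<and> Cpi p j > real T1) \<le> real_of_int k"
    and feas: "\<exists>S. feasible n p T1 T2 k S"
  shows "\<exists>S. optimal n p w T1 T2 k mu S \<and>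
     (\<forall>i\<in>{1..n}. \<forall>j\<in>{1..n}. i < j \<and> Cs p S i \<le> real T1 \<and> Cs p S j \<le> real T1
        \<longrightarrow> S i < S j) \<and>
     (\<forall>i\<in>{1..n}. \<forall>j\<in>{1..n}. i < j \<and> Cs p S i > real T2 \<and> Cs p S j > real T2
        \<longrightarrow> S i < S j)"
proof -
  have n1: "n \<ge> 1" using late_exists by auto
  obtain S0 where "optimal n p w T1 T2 k mu S0" using exists_opt[OF n1 feas] by blast
  then obtain S where opt: "optimal n p w T1 T2 k mu S"
    and minS: "\<forall>S'. optimal n p w T1 T2 k mu S' \<longrightarrow> card (invs n S) \<le> card (invs n S')"
    using ex_has_least_nat[of "optimal n p w T1 T2 k mu" S0 "\<lambda>S. card (invs n S)"] by blast
  have F: "feasible n p T1 T2 k S" using opt unfolding optimal_def by auto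
  then have dis: "\<forall>a\<in>{1..n}. \<forall>b\<in>{1..n}. a \<noteq> b \<longrightarrow> Cs p S a \<le> S b \<or> Cs p S b \<le> S a"
    and av: "\<forall>m\<in>{1..n}. Cs p S m \<le> real T1 \<or> S m \<ge> real T2"
    unfolding feasible_def valid_schedule_def by auto
  have A: "\<forall>i\<in>{1..n}. \<forall>j\<in>{1..n}. i < j \<and> Cs p S i \<le> real T1 \<and> Cs p S j \<le> real T1 \<longrightarrow> S i < S j"
  proof (rule no_inv[OF p_pos w_pos wspt mu_nonneg opt minS, of "\<lambda>a. Cs p S a \<le> real T1"])
    show "\<forall>a\<in>{1..n}. \<forall>b\<in>{1..n}. Cs p S a \<le> real T1 \<longrightarrow> Cs p S b \<le> real T1 \<longrightarrow>
        Cs p S a \<le> real T1 \<or> S b \<ge> real T2" by blast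
    show "\<forall>a\<in>{1..n}. \<forall>b\<in>{1..n}. \<forall>m\<in>{1..n}. Cs p S a \<le> real T1 \<and> Cs p S b \<le> real T1 \<and>
        S b < S m \<and> S m < S a \<longrightarrow> Cs p S m \<le> real T1"
    proof (intro ballI impI)
      fix a b m assume abm: "a \<in> {1..n}" "b \<in> {1..n}" "m \<in> {1..n}"
        and h: "Cs p S a \<le> real T1 \<and> Cs p S b \<le> real T1 \<and> S b < S m \<and> S m < S a"
      have "Cs p S m \<le> S a \<or> Cs p S a \<le> S m" using dis abm h by (metis less_irrefl)
      then show "Cs p S m \<le> real T1" using h unfolding Cs_def by auto
    qed
  qed
  have B: "\<forall>i\<in>{1..n}. \<forall>j\<in>{1..n}. i < j \<and> Cs p S i > real T2 \<and> Cs p S j > real T2 \<longrightarrow> S i < S j"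
  proof (rule no_inv[OF p_pos w_pos wspt mu_nonneg opt minS, of "\<lambda>a. Cs p S a > real T2"])
    show "\<forall>a\<in>{1..n}. \<forall>b\<in>{1..n}. Cs p S a > real T2 \<longrightarrow> Cs p S b > real T2 \<longrightarrow>
        Cs p S a \<le> real T1 \<or> S b \<ge> real T2"
      using av T12 by (metis not_le of_nat_less_iff order.strict_trans)
    show "\<forall>a\<in>{1..n}. \<forall>b\<in>{1..n}. \<forall>m\<in>{1..n}. Cs p S a > real T2 \<and> Cs p S b > real T2 \<and>
        S b < S m \<and> S m < S a \<longrightarrow> Cs p S m > real T2"
    proof (intro ballI impI)
      fix a b m assume abm: "a \<in> {1..n}" "b \<in> {1..n}" "m \<in> {1..n}"
        and h: "Cs p S a > real T2 \<and> Cs p S b > real T2 \<and> S b < S m \<and> S m < S a"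
      have "S b \<ge> real T2" using av abm h T12
        by (metis not_le of_nat_less_iff order.strict_trans)
      then show "Cs p S m > real T2" using h unfolding Cs_def by auto
    qed
  qed
  show ?thesis using opt A B by blast
qed

end
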